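(* Let $E=\{e_1,\ldots,e_m\}$ be finite, $X_1,\ldots,X_n$ fuzzy subsets of $E$, and $\Phi_1,\ldots,\Phi_K$ Boolean combinations, $\Phi_j(Y_1,\ldots,Y_n)=Y_1^{(l_{j,1})}\cap\cdots\cap Y_n^{(l_{j,n})}$. Define the probability function on $\{0,\ldots,m\}^K$ $$f(i_1,\ldots,i_K)=\sum_{\substack{Y_1,\ldots,Y_n\in\mathcal{P}(E):\\ |\Phi_1(Y_1,\ldots,Y_n)|=i_1,\ldots,|\Phi_K(Y_1,\ldots,Y_n)|=i_K}} m_{X_1}(Y_1)\cdots m_{X_n}(Y_n).$$ Then for each $j\in\{1,\ldots,K\}$, the $j$-th marginal (projection) of $f$ is a Poisson binomial distribution with parameters $p^j_s=\mu_{X_1^{(l_{j,1})}\tilde\cap\cdots\tilde\cap X_n^{(l_{j,n})}}(e_s)$, $s=1,\ldots,m$, i.e. $p^j_s=\prod_{r=1}^n \mu_{X_r^{(l_{j,r})}}(e_s)$.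
   Context: For a fuzzy set $X$ on $E$ with membership $\mu_X:E\to[0,1]$ and crisp $Y\subseteq E$, $m_X(Y)=\prod_{e\in Y}\mu_X(e)\prod_{e\in E\setminus Y}(1-\mu_X(e))$. For crisp sets $Y^{(1)}=Y$, $Y^{(0)}=E\setminus Y$; for fuzzy sets $X^{(1)}=X$, $X^{(0)}=\tilde\neg X$ with $\mu_{\tilde\neg X}(e)=1-\mu_X(e)$, and $\tilde\cap$ is the pointwise product t-norm. The Poisson binomial distribution with parameters $p_1,\ldots,p_m$ is the distribution of the number of successes in $m$ independent Bernoulli trials with success probabilities $p_1,\ldots,p_m$: $\Pr(K=k)=\sum_{A\subseteq\{1,\ldots,m\},|A|=k}\prod_{i\in A}p_i\prod_{i\notin A}(1-p_i)$. *)

theory Defs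
  imports "HOL-Analysis.Analysis"
begin

definition fuzzy_set :: "'e set \<Rightarrow> ('e \<Rightarrow> real) \<Rightarrow> bool" where
  "fuzzy_set E mu \<longleftrightarrow> (\<forall>e\<in>E. 0 \<le> mu e \<and> mu e \<le> 1)"

definition mass :: "'e set \<Rightarrow> ('e \<Rightarrow> real) \<Rightarrow> 'e set \<Rightarrow> real" where
  "mass E mu Y = (\<Prod>e\<in>Y. mu e) * (\<Prod>e\<in>E - Y. 1 - mu e)"

text \<open>Crisp exponent: Y^(1) = Y, Y^(0) = E - Y (True encodes 1).\<close>
definition crisp_lit :: "'e set \<Rightarrow> bool \<Rightarrow> 'e set \<Rightarrow> 'e set" where
  "crisp_lit E b Y = (if b then Y else E - Y)"

definition fuzzy_lit :: "bool \<Rightarrow> ('e \<Rightarrow> real) \<Rightarrow> ('e \<Rightarrow> real)" where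
  "fuzzy_lit b mu = (if b then mu else (\<lambda>e. 1 - mu e))"

text \<open>Phi_j(Y_1..Y_n) = Y_1^(l_{j,1}) \<inter> ... \<inter> Y_n^(l_{j,n}); indices r < n, and
  the empty intersection (n = 0) is E.\<close>
definition Phi :: "'e set \<Rightarrow> nat \<Rightarrow> (nat \<Rightarrow> bool) \<Rightarrow> (nat \<Rightarrow> 'e set) \<Rightarrow> 'e set" where
  "Phi E n lj Y = E \<inter> (\<Inter>r\<in>{..<n}. crisp_lit E (lj r) (Y r))"

text \<open>Tuples (Y_1,...,Y_n) of crisp subsets of E, encoded as functions on {..<n}
  (extensional: undefined indices map to {}).\<close>
definition tuples :: "'e set \<Rightarrow> nat \<Rightarrow> (nat \<Rightarrow> 'e set) set" where
  "tuples E n = PiE {..<n} (\<lambda>_. Pow E)"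

text \<open>The joint probability function f on {0..m}^K; an argument (i_1..i_K) is a
  function i on {..<K}.\<close>
definition joint_f :: "'e set \<Rightarrow> nat \<Rightarrow> (nat \<Rightarrow> 'e \<Rightarrow> real) \<Rightarrow> nat \<Rightarrow> (nat \<Rightarrow> nat \<Rightarrow> bool)
    \<Rightarrow> (nat \<Rightarrow> nat) \<Rightarrow> real" where
  "joint_f E n X K l i =
     (\<Sum>Y\<in>{Y\<in>tuples E n. \<forall>j<K. card (Phi E n (l j) Y) = i j}.
        \<Prod>r<n. mass E (X r) (Y r))"

definition marginal :: "'e set \<Rightarrow> nat \<Rightarrow> (nat \<Rightarrow> 'e \<Rightarrow> real) \<Rightarrow> nat \<Rightarrow> (nat \<Rightarrow> nat \<Rightarrow> bool)
    \<Rightarrow> nat \<Rightarrow> nat \<Rightarrow> real" where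
  "marginal E n X K l j k =
     (\<Sum>i\<in>{i\<in>PiE {..<K} (\<lambda>_. {0..card E}). i j = k}. joint_f E n X K l i)"

text \<open>Poisson binomial distribution with success probabilities p(e), e in E
  (the trials are indexed by the elements e_1..e_m of E).\<close>
definition poisson_binomial :: "'e set \<Rightarrow> ('e \<Rightarrow> real) \<Rightarrow> nat \<Rightarrow> real" where
  "poisson_binomial E p k =
     (\<Sum>A\<in>{A. A \<subseteq> E \<and> card A = k}. (\<Prod>e\<in>A. p e) * (\<Prod>e\<in>E - A. 1 - p e))"

end

theory Submission imports Defs begin

lemma mass_as_prod:
  assumes "finite E" "Z \<subseteq> E"
  shows "mass E mu Z = (\<Prod>e\<in>E. if e \<in> Z then mu e else 1 - mu e)"
proof -
  have "E \<inter> {e. e \<in> Z} = Z" "E \<inter> - {e. e \<in> Z} = E - Z" using assms by auto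
  then show ?thesis unfolding mass_def using prod.If_cases[OF assms(1), of "\<lambda>e. e \<in> Z" mu "\<lambda>e. 1 - mu e"]
    by simp
qed

lemma fiber:
  fixes X :: "nat \<Rightarrow> 'e \<Rightarrow> real"
  assumes fin: "finite E" and AE: "A \<subseteq> E"
  shows "(\<Sum>Y\<in>{Y\<in>tuples E n. Phi E n lj Y = A}. \<Prod>r<n. mass E (X r) (Y r))
       = (\<Prod>e\<in>A. (\<Prod>r<n. fuzzy_lit (lj r) (X r) e)) * (\<Prod>e\<in>E - A. 1 - (\<Prod>r<n. fuzzy_lit (lj r) (X r) e))"
proof -
  define p where "p e = (\<Prod>r<n. fuzzy_lit (lj r) (X r) e)" for e
  define w where "w e b = (\<Prod>r<n. if b r then X r e else 1 - X r e)" for e and b :: "nat \<Rightarrow> bool"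
  define h where "h e b = w e b * (if (\<forall>r<n. b r = lj r) = (e \<in> A) then 1 else 0)" for e b
  define B where "B = PiE {..<n} (\<lambda>_. UNIV :: bool set)"
  have finT: "finite (tuples E n)" unfolding tuples_def using fin by (simp add: finite_PiE)
  have step1: "(\<Prod>r<n. mass E (X r) (Y r)) * (if Phi E n lj Y = A then 1 else 0) = (\<Prod>e\<in>E. h e (\<lambda>r. e \<in> Y r))"
    if Y: "Y \<in> tuples E n" for Y
  proof -
    have sub: "Y r \<subseteq> E" if "r < n" for r using Y that by (auto simp: tuples_def PiE_iff)
    have "(\<Prod>r<n. mass E (X r) (Y r)) = (\<Prod>r<n. \<Prod>e\<in>E. if e \<in> Y r then X r e else 1 - X r e)"
      using sub by (intro prod.cong refl mass_as_prod[OF fin]) auto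
    also have "\<dots> = (\<Prod>e\<in>E. w e (\<lambda>r. e \<in> Y r))" unfolding w_def by (rule prod.swap)
    finally have 1: "(\<Prod>r<n. mass E (X r) (Y r)) = (\<Prod>e\<in>E. w e (\<lambda>r. e \<in> Y r))" .
    have PhiY: "Phi E n lj Y = {e\<in>E. \<forall>r<n. (e \<in> Y r) = lj r}"
      unfolding Phi_def crisp_lit_def by auto
    have 2: "(if Phi E n lj Y = A then 1 else 0) = (\<Prod>e\<in>E. (if (\<forall>r<n. (e \<in> Y r) = lj r) = (e \<in> A) then 1 else (0::real)))"
    proof (cases "Phi E n lj Y = A")
      case True
      then show ?thesis using PhiY by (auto intro!: prod.neutral)
    next
      case False
      then obtain e where "e \<in> E" "\<not> ((\<forall>r<n. (e \<in> Y r) = lj r) = (e \<in> A))" using PhiY AE by auto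
      then show ?thesis using False fin by (subst prod_zero) auto
    qed
    show ?thesis unfolding 1 2 h_def prod.distrib by simp
  qed
  have "(\<Sum>Y\<in>{Y\<in>tuples E n. Phi E n lj Y = A}. \<Prod>r<n. mass E (X r) (Y r))
      = (\<Sum>Y\<in>tuples E n. (\<Prod>r<n. mass E (X r) (Y r)) * (if Phi E n lj Y = A then 1 else 0))"
    using finT by (simp add: sum.inter_filter[symmetric] if_distrib cong: if_cong)
  also have "\<dots> = (\<Sum>Y\<in>tuples E n. \<Prod>e\<in>E. h e (\<lambda>r. e \<in> Y r))"
    using step1 by (rule sum.cong[OF refl])
  also have "\<dots> = (\<Sum>G\<in>PiE E (\<lambda>_. B). \<Prod>e\<in>E. h e (G e))"
  proof -
    define phi where "phi Y = (\<lambda>e\<in>E. \<lambda>r\<in>{..<n}. e \<in> Y r)" for Y :: "nat \<Rightarrow> 'e set"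
    define psi where "psi G = (\<lambda>r\<in>{..<n}. {e\<in>E. G e r})" for G :: "'e \<Rightarrow> nat \<Rightarrow> bool"
    have bij: "bij_betw phi (tuples E n) (PiE E (\<lambda>_. B))"
    proof (rule bij_betw_byWitness[where f'=psi])
      show "\<forall>a\<in>tuples E n. psi (phi a) = a"
        by (auto simp: tuples_def PiE_iff phi_def psi_def fun_eq_iff extensional_def)
      show "\<forall>a'\<in>PiE E (\<lambda>_. B). phi (psi a') = a'"
        by (auto simp: B_def PiE_iff phi_def psi_def fun_eq_iff extensional_def)
      show "phi ` tuples E n \<subseteq> PiE E (\<lambda>_. B)"
        by (auto simp: B_def tuples_def PiE_iff phi_def)
      show "psi ` PiE E (\<lambda>_. B) \<subseteq> tuples E n"
        by (auto simp: B_def tuples_def PiE_iff psi_def)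
    qed
    have "(\<Sum>Y\<in>tuples E n. \<Prod>e\<in>E. h e (\<lambda>r. e \<in> Y r)) = (\<Sum>Y\<in>tuples E n. \<Prod>e\<in>E. h e (phi Y e))"
      by (intro sum.cong prod.cong refl) (simp add: phi_def h_def w_def)
    also have "\<dots> = (\<Sum>G\<in>PiE E (\<lambda>_. B). \<Prod>e\<in>E. h e (G e))"
      using sum.reindex_bij_betw[OF bij, of "\<lambda>G. \<Prod>e\<in>E. h e (G e)"] .
    finally show ?thesis .
  qed
  also have "\<dots> = (\<Prod>e\<in>E. \<Sum>b\<in>B. h e b)"
    by (rule prod_sum_PiE[symmetric]) (auto simp: fin B_def finite_PiE)
  also have "\<dots> = (\<Prod>e\<in>E. if e \<in> A then p e else 1 - p e)"
  proof (rule prod.cong[OF refl])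
    fix e assume "e \<in> E"
    have finB: "finite B" by (simp add: B_def finite_PiE)
    define l0 where "l0 = restrict lj {..<n}"
    have l0B: "l0 \<in> B" by (simp add: l0_def B_def)
    have eq: "(\<forall>r<n. b r = lj r) = (b = l0)" if "b \<in> B" for b
      using that by (auto simp: B_def l0_def PiE_iff fun_eq_iff extensional_def)
    have wl0: "w e l0 = p e"
      unfolding w_def p_def l0_def fuzzy_lit_def by (intro prod.cong) auto
    have sumw: "(\<Sum>b\<in>B. w e b) = 1"
    proof -
      have "(\<Sum>b\<in>B. w e b) = (\<Prod>r<n. \<Sum>t\<in>(UNIV::bool set). if t then X r e else 1 - X r e)"
        unfolding w_def B_def by (rule prod_sum_PiE[symmetric]) auto
      also have "\<dots> = 1" by (simp add: UNIV_bool)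
      finally show ?thesis .
    qed
    have hs: "(\<Sum>b\<in>B. h e b) = (\<Sum>b\<in>B. if (b = l0) = (e \<in> A) then w e b else 0)"
      unfolding h_def using eq by (intro sum.cong refl) auto
    show "(\<Sum>b\<in>B. h e b) = (if e \<in> A then p e else 1 - p e)"
    proof (cases "e \<in> A")
      case True
      then show ?thesis unfolding hs using finB l0B wl0 by (simp add: sum.delta')
    next
      case False
      have "(\<Sum>b\<in>B. if (b = l0) = (e \<in> A) then w e b else 0) = (\<Sum>b\<in>B. w e b) - (\<Sum>b\<in>B. if b = l0 then w e b else 0)"
        unfolding sum_subtractf[symmetric] using False by (intro sum.cong) auto
      then show ?thesis unfolding hs using False finB l0B wl0 sumw by (simp add: sum.delta')
    qed
  qed
  also have "\<dots> = (\<Prod>e\<in>A. p e) * (\<Prod>e\<in>E - A. 1 - p e)"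
  proof -
    have "E \<inter> {e. e \<in> A} = A" "E \<inter> - {e. e \<in> A} = E - A" using AE by auto
    then show ?thesis using prod.If_cases[OF fin, of "\<lambda>e. e \<in> A" p "\<lambda>e. 1 - p e"] by simp
  qed
  finally show ?thesis unfolding p_def .
qed

theorem theorem2:
  fixes E :: "'e set" and n K :: nat
    and X :: "nat \<Rightarrow> 'e \<Rightarrow> real"
    and l :: "nat \<Rightarrow> nat \<Rightarrow> bool"
  assumes "finite E"
    and "\<And>r. r < n \<Longrightarrow> fuzzy_set E (X r)"
    and "j < K"
  shows "\<forall>k \<le> card E.
           marginal E n X K l j k
             = poisson_binomial E (\<lambda>e. \<Prod>r<n. fuzzy_lit (l j r) (X r) e) k"
proof (intro allI impI)
  fix k assume "k \<le> card E"
  note fin = assms(1)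
  define M where "M Y = (\<Prod>r<n. mass E (X r) (Y r))" for Y
  define S where "S = {Y\<in>tuples E n. card (Phi E n (l j) Y) = k}"
  define T where "T = {i\<in>PiE {..<K} (\<lambda>_. {0..card E}). i j = k}"
  define g where "g Y = (\<lambda>j'\<in>{..<K}. card (Phi E n (l j') Y))" for Y
  have finT: "finite (tuples E n)" unfolding tuples_def using fin by (simp add: finite_PiE)
  have finS: "finite S" unfolding S_def using finT by simp
  have finTT: "finite T" unfolding T_def by (simp add: finite_PiE)
  have PhiE: "Phi E n lj Y \<subseteq> E" for lj Y unfolding Phi_def by auto
  have cardle: "card (Phi E n lj Y) \<le> card E" for lj Y by (rule card_mono[OF fin PhiE])
  have gST: "g ` S \<subseteq> T"
    using assms(3) cardle by (auto simp: g_def S_def T_def PiE_iff)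
  have "marginal E n X K l j k = (\<Sum>i\<in>T. \<Sum>Y\<in>{Y\<in>S. g Y = i}. M Y)"
    unfolding marginal_def joint_f_def T_def[symmetric] M_def
  proof (intro sum.cong refl arg_cong[where f="\<lambda>A. sum _ A"])
    fix i assume i: "i \<in> T"
    show "{Y \<in> tuples E n. \<forall>j<K. card (Phi E n (l j) Y) = i j} = {Y \<in> S. g Y = i}"
      using i assms(3) by (auto simp: S_def T_def g_def PiE_iff fun_eq_iff extensional_def)
  qed
  also have "\<dots> = (\<Sum>Y\<in>S. M Y)" by (rule sum.group[OF finS finTT gST])
  also have "\<dots> = (\<Sum>A\<in>{A. A \<subseteq> E \<and> card A = k}. \<Sum>Y\<in>{Y\<in>S. Phi E n (l j) Y = A}. M Y)"
    by (rule sum.group[symmetric, OF finS]) (use fin PhiE in \<open>auto simp: S_def\<close>)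
  also have "\<dots> = poisson_binomial E (\<lambda>e. \<Prod>r<n. fuzzy_lit (l j r) (X r) e) k"
    unfolding poisson_binomial_def
  proof (intro sum.cong refl)
    fix A assume A: "A \<in> {A. A \<subseteq> E \<and> card A = k}"
    have "{Y\<in>S. Phi E n (l j) Y = A} = {Y\<in>tuples E n. Phi E n (l j) Y = A}"
      using A by (auto simp: S_def)
    then show "(\<Sum>Y\<in>{Y\<in>S. Phi E n (l j) Y = A}. M Y) =
      (\<Prod>e\<in>A. \<Prod>r<n. fuzzy_lit (l j r) (X r) e) * (\<Prod>e\<in>E - A. 1 - (\<Prod>r<n. fuzzy_lit (l j r) (X r) e))"
      unfolding M_def using fiber[OF fin, where A=A and n=n and lj="l j" and X=X] A by simp
  qed
  finally show "marginal E n X K l j k = poisson_binomial E (\<lambda>e. \<Prod>r<n. fuzzy_lit (l j r) (X r) e) k" .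
qed

end
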